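(* Under the hypotheses of the setting below, for every $k$ with $H_k\bar z^k\neq H_kz^k$ the stepsize satisfies $\alpha_k\ge \tfrac{\delta_k}{\gamma_k}+\tfrac12>0$, the update satisfies $z^{k+1}=(1-\lambda_k)z^k+\lambda_k P_{\mathcal D_k}(z^k)$ where $P_{\mathcal D_k}$ is the Euclidean projection onto the closed half-space $\mathcal D_k=\{w:\langle H_kz^k-H_k\bar z^k,\bar z^k-w\rangle\ge\tfrac{\delta_k}{\gamma_k}\|H_kz^k-H_k\bar z^k\|^2\}$, $\mathcal S^\star\subseteq\mathcal D_k$, and for every $z^\star\in\mathcal S^\star$ $$\|z^{k+1}-z^\star\|^2\le\|z^k-z^\star\|^2-\frac{\lambda_k(2-\lambda_k)(\tfrac{\gamma_k}{2}+\delta_k)^2}{\gamma_k^2}\|H_k\bar z^k-H_kz^k\|^2 .$$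
   Context: Setting: $A:\mathbb R^n\rightrightarrows\mathbb R^n$ maximally monotone, $F:\mathbb R^n\to\mathbb R^n$ $L$-Lipschitz, $T=A+F$, $\operatorname{zer}T=\{z:0\in Tz\}$; there is a nonempty $\mathcal S^\star\subseteq\operatorname{zer}T$ and $\rho\in\mathbb R$ with $\langle v,z-z^\star\rangle\ge\rho\|v\|^2$ for all $z^\star\in\mathcal S^\star$, $(z,v)$ with $v\in Tz$. Parameters: $\lambda_k\in(0,2)$, $\gamma_k\in(\max\{0,-2\rho\},\tfrac1L]$, $\delta_k\in(-\tfrac{\gamma_k}2,\rho]$. Iteration (AdaptiveEG+): $H_k:=\mathrm{id}-\gamma_kF$, $\bar z^k=(\mathrm{id}+\gamma_kA)^{-1}(z^k-\gamma_kFz^k)$, $\alpha_k=\frac{\delta_k}{\gamma_k}+\frac{\langle\bar z^k-z^k,H_k\bar z^k-H_kz^k\rangle}{\|H_k\bar z^k-H_kz^k\|^2}$, $z^{k+1}=z^k+\lambda_k\alpha_k(H_k\bar z^k-H_kz^k)$. *)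

theory Defs
  imports "HOL-Analysis.Analysis"
begin

definition monotone_op :: "('a::real_inner \<Rightarrow> 'a set) \<Rightarrow> bool" where
  "monotone_op A \<longleftrightarrow>
     (\<forall>x y u v. u \<in> A x \<longrightarrow> v \<in> A y \<longrightarrow> inner (u - v) (x - y) \<ge> 0)"

definition maximally_monotone :: "('a::real_inner \<Rightarrow> 'a set) \<Rightarrow> bool" where
  "maximally_monotone A \<longleftrightarrow> monotone_op A \<and>
     (\<forall>x u. (\<forall>y v. v \<in> A y \<longrightarrow> inner (u - v) (x - y) \<ge> 0) \<longrightarrow> u \<in> A x)"

definition op_sum :: "('a::real_vector \<Rightarrow> 'a set) \<Rightarrow> ('a \<Rightarrow> 'a) \<Rightarrow> 'a \<Rightarrow> 'a set" where
  "op_sum A F z = (\<lambda>a. a + F z) ` A z"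

definition zer :: "('a::real_vector \<Rightarrow> 'a set) \<Rightarrow> 'a set" where
  "zer T = {z. 0 \<in> T z}"

text \<open>Resolvent (id + gamma A)^{-1} evaluated at y, as the (set-valued) inverse image;
  for monotone A and gamma > 0 it is at most a singleton, for maximally monotone A exactly one.\<close>
definition resolvent :: "('a::real_vector \<Rightarrow> 'a set) \<Rightarrow> real \<Rightarrow> 'a \<Rightarrow> 'a set" where
  "resolvent A \<gamma> y = {x. y \<in> (\<lambda>a. x + \<gamma> *\<^sub>R a) ` A x}"

end

theory Submission
  imports Defs
begin

theorem mainTheorem2:
  fixes A :: "'a::euclidean_space \<Rightarrow> 'a set"
    and F :: "'a \<Rightarrow> 'a"
    and L \<rho> :: real
    and S :: "'a set"
    and z zbar :: "nat \<Rightarrow> 'a"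
    and lam \<gamma> \<delta> :: "nat \<Rightarrow> real"
    and k :: nat
  defines "H \<equiv> (\<lambda>j w. w - \<gamma> j *\<^sub>R F w)"
  defines "\<alpha> \<equiv> (\<lambda>j. \<delta> j / \<gamma> j
              + inner (zbar j - z j) (H j (zbar j) - H j (z j)) / (norm (H j (zbar j) - H j (z j)))\<^sup>2)"
  defines "D \<equiv> (\<lambda>j. {w. inner (H j (z j) - H j (zbar j)) (zbar j - w)
              \<ge> \<delta> j / \<gamma> j * (norm (H j (z j) - H j (zbar j)))\<^sup>2})"
  assumes A_max: "maximally_monotone A"
    and F_lip: "L-lipschitz_on UNIV F"
    and S_ne: "S \<noteq> {}"
    and S_zer: "S \<subseteq> zer (op_sum A F)"
    and weak_minty: "\<forall>zs\<in>S. \<forall>w v. v \<in> op_sum A F w \<longrightarrow> inner v (w - zs) \<ge> \<rho> * (norm v)\<^sup>2"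
    and lam_bd: "\<forall>j. 0 < lam j \<and> lam j < 2"
    and gam: "\<forall>j. max 0 (-2 * \<rho>) < \<gamma> j \<and> \<gamma> j * L \<le> 1"
    and del: "\<forall>j. - \<gamma> j / 2 < \<delta> j \<and> \<delta> j \<le> \<rho>"
    and zbar_def: "\<forall>j. zbar j \<in> resolvent A (\<gamma> j) (z j - \<gamma> j *\<^sub>R F (z j))"
    and iter: "\<forall>j. z (Suc j) = z j + (lam j * \<alpha> j) *\<^sub>R (H j (zbar j) - H j (z j))"
    and nz: "H k (zbar k) \<noteq> H k (z k)"
  shows "\<alpha> k \<ge> \<delta> k / \<gamma> k + 1/2 \<and> \<delta> k / \<gamma> k + 1/2 > 0
    \<and> closed (D k)
    \<and> z (Suc k) = (1 - lam k) *\<^sub>R z k + lam k *\<^sub>R closest_point (D k) (z k)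
    \<and> S \<subseteq> D k
    \<and> (\<forall>zs\<in>S. (norm (z (Suc k) - zs))\<^sup>2 \<le> (norm (z k - zs))\<^sup>2
         - lam k * (2 - lam k) * (\<gamma> k / 2 + \<delta> k)\<^sup>2 / (\<gamma> k)\<^sup>2
           * (norm (H k (zbar k) - H k (z k)))\<^sup>2)"
proof -
  define g where "g = \<gamma> k"
  define dl where "dl = \<delta> k"
  define l where "l = lam k"
  define d where "d = H k (zbar k) - H k (z k)"
  define e where "e = zbar k - z k"
  define f where "f = g *\<^sub>R (F (zbar k) - F (z k))"
  define c where "c = dl / g * (norm d)^2"
  define al where "al = \<alpha> k"
  have g_pos: "g > 0" using gam unfolding g_def by (metis max.strict_boundedE)
  have gL: "g * L \<le> 1" using gam unfolding g_def by blast
  have l_bd: "0 < l" "l < 2" using lam_bd unfolding l_def by auto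
  have dl_bd: "- g / 2 < dl" "dl \<le> \<rho>" using del unfolding g_def dl_def by auto
  have d_eq: "d = e - f" unfolding d_def e_def f_def H_def g_def by (simp add: algebra_simps)
  have dnz: "d \<noteq> 0" using nz d_def by simp
  have nd: "(norm d)^2 > 0" using dnz by simp
  have lip: "norm (F (zbar k) - F (z k)) \<le> L * norm e"
    using lipschitz_onD[OF F_lip, of "zbar k" "z k"] by (simp add: dist_norm e_def)
  have nf: "norm f \<le> norm e"
  proof -
    have "norm f = g * norm (F (zbar k) - F (z k))" using g_pos by (simp add: f_def)
    also have "\<dots> \<le> g * (L * norm e)" using lip g_pos by (simp add: mult_left_mono)
    also have "\<dots> = (g*L) * norm e" by simp
    also have "\<dots> \<le> 1 * norm e" by (rule mult_right_mono[OF gL], simp)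
    finally show ?thesis by simp
  qed
  have nf2: "(norm f)^2 \<le> (norm e)^2" using nf by (simp add: power_mono)
  have ndd: "(norm d)^2 = (norm e)^2 - 2*inner e f + (norm f)^2"
    by (simp add: d_eq power2_norm_eq_inner inner_diff_left inner_diff_right inner_commute)
  have ied: "inner e d = (norm e)^2 - inner e f"
    by (simp add: d_eq power2_norm_eq_inner inner_diff_right)
  have key: "2 * inner e d \<ge> (norm d)^2" using ndd ied nf2 by linarith
  have al_eq: "al = dl/g + inner e d / (norm d)^2"
    unfolding al_def \<alpha>_def dl_def g_def e_def d_def by simp
  have half: "inner e d / (norm d)^2 \<ge> 1/2" using key nd by (simp add: le_divide_eq)
  have c1: "al \<ge> dl/g + 1/2" using al_eq half by simp
  have c2: "dl/g + 1/2 > 0"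
  proof -
    have "dl/g > -1/2" using dl_bd g_pos by (simp add: divide_simps)
    thus ?thesis by simp
  qed
  have al_pos: "al > 0" using c1 c2 by simp
  define u where "u = -d"
  define b where "b = inner u (zbar k) - c"
  have Hu: "H k (z k) - H k (zbar k) = u" unfolding u_def d_def by simp
  have Deq: "D k = {w. inner u w \<le> b}"
    unfolding D_def Hu b_def c_def u_def dl_def g_def
    by (auto simp: inner_diff_right)
  have c3: "closed (D k)" unfolding Deq by (rule closed_halfspace_le)
  define P where "P = z k + al *\<^sub>R d"
  have iu: "inner u (z k) - b = al * (norm d)^2"
  proof -
    have "inner u (z k) - b = inner d e + c"
      unfolding b_def u_def e_def by (simp add: inner_diff_right)
    also have "\<dots> = al * (norm d)^2" using al_eq nd unfolding c_def
      by (simp add: field_simps inner_commute)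
    finally show ?thesis .
  qed
  have uP: "inner u P = b"
  proof -
    have "inner u P = inner u (z k) - al * (norm d)^2"
      unfolding P_def u_def by (simp add: inner_add_right power2_norm_eq_inner)
    thus ?thesis using iu by simp
  qed
  have PD: "P \<in> D k" unfolding Deq using uP by simp
  have Pclose: "\<forall>y\<in>D k. dist (z k) P \<le> dist (z k) y"
  proof
    fix y assume "y \<in> D k"
    hence yb: "inner u y \<le> b" unfolding Deq by simp
    have ip: "inner (z k - P) (P - y) \<ge> 0"
    proof -
      have "z k - P = al *\<^sub>R u" unfolding P_def u_def by simp
      hence "inner (z k - P) (P - y) = al * (b - inner u y)"
        using uP by (simp add: inner_diff_right algebra_simps)
      thus ?thesis using yb al_pos by simp
    qed
    have "(norm (z k - y))^2 = (norm (z k - P))^2 + (norm (P - y))^2 + 2 * inner (z k - P) (P - y)"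
    proof -
      have gen: "(norm (p + q))^2 = (norm p)^2 + (norm q)^2 + 2 * inner p q" for p q :: 'a
        by (simp add: power2_norm_eq_inner inner_add_left inner_add_right inner_commute)
      have "z k - y = (z k - P) + (P - y)" by simp
      hence "(norm (z k - y))^2 = (norm ((z k - P) + (P - y)))^2" by (rule arg_cong)
      thus ?thesis by (simp only: gen)
    qed
    hence "(norm (z k - P))^2 \<le> (norm (z k - y))^2" using ip by simp
    thus "dist (z k) P \<le> dist (z k) y" by (simp add: dist_norm)
  qed
  have Pcl: "P = closest_point (D k) (z k)"
    by (rule closest_point_unique[OF _ c3 PD Pclose]) (simp add: Deq convex_halfspace_le)
  have zs_eq: "z (Suc k) = z k + (l * al) *\<^sub>R d"
    using iter unfolding l_def al_def d_def by simp
  have c4: "z (Suc k) = (1 - lam k) *\<^sub>R z k + lam k *\<^sub>R closest_point (D k) (z k)"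
    unfolding Pcl[symmetric] zs_eq P_def l_def by (simp add: algebra_simps)
  obtain a where aA: "a \<in> A (zbar k)" and ha: "z k - g *\<^sub>R F (z k) = zbar k + g *\<^sub>R a"
    using zbar_def unfolding resolvent_def g_def by blast
  define v where "v = a + F (zbar k)"
  have vT: "v \<in> op_sum A F (zbar k)" unfolding op_sum_def v_def using aA by simp
  have gv: "g *\<^sub>R v = u"
  proof -
    have "g *\<^sub>R v = g *\<^sub>R a + g *\<^sub>R F (zbar k)" unfolding v_def by (simp add: scaleR_add_right)
    also have "g *\<^sub>R a = z k - g *\<^sub>R F (z k) - zbar k" using ha by (simp add: algebra_simps)
    finally show ?thesis unfolding u_def d_def H_def g_def by (simp add: algebra_simps)
  qed
  have nv: "(norm d)^2 = g^2 * (norm v)^2"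
  proof -
    have "norm d = norm u" unfolding u_def by simp
    also have "\<dots> = g * norm v" using gv[symmetric] g_pos by simp
    finally show ?thesis by (simp add: power_mult_distrib)
  qed
  have SD: "\<forall>zs\<in>S. inner u (zbar k - zs) \<ge> c"
  proof
    fix zs assume "zs \<in> S"
    hence "inner v (zbar k - zs) \<ge> \<rho> * (norm v)^2" using weak_minty vT by blast
    hence "g * inner v (zbar k - zs) \<ge> g * (\<rho> * (norm v)^2)"
      using g_pos by (simp add: mult_left_mono)
    hence 1: "inner u (zbar k - zs) \<ge> \<rho> / g * (norm d)^2"
      using gv[symmetric] nv g_pos by (simp add: power2_eq_square field_simps)
    have "c \<le> \<rho> / g * (norm d)^2" unfolding c_def
      using dl_bd g_pos by (intro mult_right_mono divide_right_mono) auto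
    thus "inner u (zbar k - zs) \<ge> c" using 1 by linarith
  qed
  have c5: "S \<subseteq> D k" unfolding Deq b_def using SD by (auto simp: inner_diff_right)
  have c6: "\<forall>zs\<in>S. (norm (z (Suc k) - zs))\<^sup>2 \<le> (norm (z k - zs))\<^sup>2
         - lam k * (2 - lam k) * (\<gamma> k / 2 + \<delta> k)\<^sup>2 / (\<gamma> k)\<^sup>2
           * (norm (H k (zbar k) - H k (z k)))\<^sup>2"
  proof
    fix zs assume zsS: "zs \<in> S"
    have idz: "inner d (z k - zs) \<le> - al * (norm d)^2"
    proof -
      have h: "inner u (zbar k - zs) \<ge> c" using SD zsS by blast
      have "inner d (z k - zs) = - inner d e - inner u (zbar k - zs)"
        unfolding u_def e_def by (simp add: inner_diff_right)
      also have "\<dots> \<le> - inner d e - c" using h by simp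
      also have "\<dots> = - al * (norm d)^2" using al_eq nd unfolding c_def
        by (simp add: field_simps inner_commute)
      finally show ?thesis .
    qed
    have "(norm (z (Suc k) - zs))^2 = (norm ((z k - zs) + (l*al) *\<^sub>R d))^2"
      unfolding zs_eq by (simp add: algebra_simps)
    also have "\<dots> = (norm (z k - zs))^2 + 2 * (l*al) * inner d (z k - zs) + (l*al)^2 * (norm d)^2"
    proof -
      have gen: "(norm (p + q))^2 = (norm p)^2 + (norm q)^2 + 2 * inner p q" for p q :: 'a
        by (simp add: power2_norm_eq_inner inner_add_left inner_add_right inner_commute)
      show ?thesis unfolding gen by (simp add: inner_commute power_mult_distrib)
    qed
    also have "\<dots> \<le> (norm (z k - zs))^2 + 2 * (l*al) * (- al * (norm d)^2) + (l*al)^2 * (norm d)^2"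
    proof -
      have "0 \<le> 2*(l*al)" using l_bd al_pos by simp
      thus ?thesis by (intro add_mono order_refl mult_left_mono idz)
    qed
    also have "\<dots> = (norm (z k - zs))^2 - l * (2 - l) * al^2 * (norm d)^2"
      by (simp add: power2_eq_square) algebra
    also have "\<dots> \<le> (norm (z k - zs))^2 - l * (2 - l) * (g / 2 + dl)\<^sup>2 / g\<^sup>2 * (norm d)^2"
    proof -
      have "(g / 2 + dl) / g = dl/g + 1/2" using g_pos by (simp add: field_simps)
      hence "((g / 2 + dl) / g)\<^sup>2 \<le> al^2" using c1 c2
        by (intro power_mono) auto
      hence "(g / 2 + dl)\<^sup>2 / g\<^sup>2 \<le> al^2" by (simp add: power_divide)
      hence "l * (2 - l) * ((g / 2 + dl)\<^sup>2 / g\<^sup>2) \<le> l * (2 - l) * al^2"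
        using l_bd by (intro mult_left_mono) auto
      hence "l * (2 - l) * (g / 2 + dl)\<^sup>2 / g\<^sup>2 \<le> l * (2 - l) * al^2"
        by simp
      hence "l * (2 - l) * (g / 2 + dl)\<^sup>2 / g\<^sup>2 * (norm d)^2 \<le> l * (2 - l) * al^2 * (norm d)^2"
        by (intro mult_right_mono) auto
      thus ?thesis by simp
    qed
    finally show "(norm (z (Suc k) - zs))\<^sup>2 \<le> (norm (z k - zs))\<^sup>2
         - lam k * (2 - lam k) * (\<gamma> k / 2 + \<delta> k)\<^sup>2 / (\<gamma> k)\<^sup>2
           * (norm (H k (zbar k) - H k (z k)))\<^sup>2"
      unfolding l_def g_def dl_def d_def .
  qed
  show ?thesis using c1 c2 c3 c4 c5 c6 unfolding al_def g_def dl_def by blast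
qed

end
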